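(* Let $R$ be the holistic system robustness random variable (defined in the context), with distribution $\pi_R$, so that $\mathbb{P}_{\pi_R}[-R\le a]=1$. Let $\epsilon\in(0,1)$, $\gamma\in[0,1)$, $\alpha\in(0,1]$, and define \[ L(x,\mu,t)=t\left(\mu+\frac{1}{\alpha}\max\left\{\frac{x}{t}-\mu,0\right\}\right),\qquad u_b(\mu,t)=L(a,\mu,t). \] Let $r_1,\dots,r_N$ be independent samples of $R$ with $N\ge\frac{\log(1-\gamma)}{\log(1-\epsilon)}$, and $\zeta^*_N(\mu,t)=\max_{1\le k\le N}L(-r_k,\mu,t)$. Then \[ \mathbb{P}^N_{\pi_R}\left[r^*_C\triangleq\inf_{\mu\in\mathbb{R},\ t>0}\zeta^*_N(\mu,t)(1-\epsilon)+u_b(\mu,t)\epsilon\ \ge\ \mathrm{CVaR}_\alpha(-R)\right]\ge\gamma. \]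
   Context: System setting: $\dot x = f(x,u)+\xi$, $x\in\mathcal{X}\subset\mathbb{R}^n$, $u=U(x,\theta)\in\mathcal{U}\subset\mathbb{R}^m$, $\theta\in\Theta\subset\mathbb{R}^p$ a parameter fixed along a trajectory, and $\xi$ stochastic noise with unknown distribution $\pi_\xi(x,u,t)$. $x^\theta$ denotes the resulting closed-loop state signal in $\mathcal{S}=\{s:\mathbb{R}_{\ge0}\to\mathbb{R}^n\}$ from an initial condition $x_0\in\mathcal{X}_0\subseteq\mathcal{X}$. A robustness metric is a function $\rho:\mathcal{S}\to[-a,b]$ with $a,b>0$ such that $\rho(s)\ge0$ only for signals exhibiting desired properties. The holistic system robustness $R$ is the scalar random variable whose samples are $r=\rho(x^\theta)$, where $(x_0,\theta)$ is sampled uniformly from $\mathcal{X}_0\times\Theta$. $\mathrm{CVaR}_\alpha(Z)=\inf_{z\in\mathbb{R}} z+\frac{\mathbb{E}[\max(Z-z,0)]}{\alpha}$. $\zeta^*_N(\mu,t)$ is the solution of $\min_\zeta\zeta$ s.t. $\zeta\ge L(-r_i,\mu,t)$ for all $i$; $\mathbb{P}^N_{\pi_R}$ is the $N$-fold product measure of the i.i.d. sample. *)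

theory Defs
  imports "HOL-Probability.Probability"
begin

definition CVaR :: "real \<Rightarrow> 'a measure \<Rightarrow> ('a \<Rightarrow> real) \<Rightarrow> real" where
  "CVaR alpha M X = (INF z::real. z + (\<integral>\<omega>. max (X \<omega> - z) 0 \<partial>M) / alpha)"

definition Lfun :: "real \<Rightarrow> real \<Rightarrow> real \<Rightarrow> real \<Rightarrow> real" where
  "Lfun alpha x mu t = t * (mu + (1 / alpha) * max (x / t - mu) 0)"

definition ub :: "real \<Rightarrow> real \<Rightarrow> real \<Rightarrow> real \<Rightarrow> real" where
  "ub alpha a mu t = Lfun alpha a mu t"

definition zeta_star :: "real \<Rightarrow> nat \<Rightarrow> (nat \<Rightarrow> real) \<Rightarrow> real \<Rightarrow> real \<Rightarrow> real" where
  "zeta_star alpha N r mu t = (MAX k\<in>{..<N}. Lfun alpha (- r k) mu t)"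

definition r_star_C :: "real \<Rightarrow> real \<Rightarrow> real \<Rightarrow> nat \<Rightarrow> (nat \<Rightarrow> real) \<Rightarrow> real" where
  "r_star_C alpha a eps N r =
     (INF p \<in> {p::real\<times>real. snd p > 0}.
        zeta_star alpha N r (fst p) (snd p) * (1 - eps) + ub alpha a (fst p) (snd p) * eps)"

end

theory Submission
  imports Defs
begin

lemma Lfun_eq: assumes "t > 0" "alpha > 0"
  shows "Lfun alpha x mu t = t*mu + max (x - t*mu) 0 / alpha"
proof -
  have "t * max (x/t - mu) 0 = max (x - t*mu) 0"
    using assms by (cases "x/t - mu \<ge> 0") (auto simp: field_simps max_def)
  then show ?thesis unfolding Lfun_def by (simp add: algebra_simps)
qed

lemma Lfun_mono: assumes "t > 0" "alpha > 0" shows "mono (\<lambda>x. Lfun alpha x mu t)"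
proof (rule monoI)
  fix x y :: real assume "x \<le> y"
  then have "max (x - t*mu) 0 / alpha \<le> max (y - t*mu) 0 / alpha"
    using assms by (intro divide_right_mono max.mono) auto
  then show "Lfun alpha x mu t \<le> Lfun alpha y mu t" by (simp add: Lfun_eq[OF assms])
qed

lemma Lfun_ge: assumes "t > 0" "alpha > 0" "alpha \<le> 1" shows "Lfun alpha x mu t \<ge> x"
proof -
  have "max (x - t*mu) 0 / alpha \<ge> max (x - t*mu) 0"
    using assms by (simp add: le_divide_eq mult_left_le)
  then show ?thesis by (simp add: Lfun_eq[OF assms(1,2)])
qed

lemma quantile_exists:
  fixes M :: "real measure" and a b eps :: real
  assumes "prob_space M" and sM: "sets M = sets borel"
    and AE: "AE r in M. - a \<le> r \<and> r \<le> b"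
    and "0 < eps" and "eps < 1"
  shows "\<exists>c. measure M {x. x < c} \<le> eps \<and> measure M {x. c < x} \<le> 1 - eps"
proof -
  interpret prob_space M by fact
  have spM: "space M = UNIV" using sets_eq_imp_space_eq[OF sM] by simp
  have sets: "\<And>A. A \<in> sets borel \<Longrightarrow> A \<in> sets M" using sM by simp
  define F where "F s = measure M {x. x < s}" for s
  have Fmono: "F s \<le> F s'" if "s \<le> s'" for s s'
    unfolding F_def using that by (intro finite_measure_mono sets) auto
  have "AE x in M. x \<notin> {x. x < -a}" by (rule eventually_mono[OF AE]) auto
  then have Fa: "F (-a) = 0"
    unfolding F_def by (subst prob_eq_0) (auto intro: sets)
  have "AE x in M. x \<in> {x. x < b+1}" by (rule eventually_mono[OF AE]) auto
  then have Fb: "F (b+1) = 1"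
    unfolding F_def by (subst prob_eq_1) (auto intro: sets)
  define S where "S = {s. F s \<le> eps}"
  define c where "c = Sup S"
  have bdd: "bdd_above S"
  proof (rule bdd_aboveI)
    fix s assume "s \<in> S"
    show "s \<le> b + 1"
    proof (rule ccontr)
      assume "\<not> s \<le> b + 1"
      then have "F (b+1) \<le> F s" by (intro Fmono) auto
      with Fb \<open>s \<in> S\<close> \<open>eps < 1\<close> show False by (auto simp: S_def)
    qed
  qed
  have aS: "-a \<in> S" using Fa \<open>0 < eps\<close> by (simp add: S_def)
  have "(\<lambda>n. measure M {x. x < c - inverse (real (Suc n))}) \<longlonglongrightarrow> measure M (\<Union>n. {x. x < c - inverse (real (Suc n))})"
  proof (rule Lim_measure_incseq)
    show "range (\<lambda>n. {x. x < c - inverse (real (Suc n))}) \<subseteq> sets M" by (auto intro: sets)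
    show "incseq (\<lambda>n. {x. x < c - inverse (real (Suc n))})"
    proof (rule incseq_SucI)
      fix n
      have "inverse (real (Suc (Suc n))) \<le> inverse (real (Suc n))"
        by (simp add: le_imp_inverse_le)
      then have "\<And>x. x < c - inverse (real (Suc n)) \<Longrightarrow> x < c - inverse (real (Suc (Suc n)))"
        by linarith
      then show "{x. x < c - inverse (real (Suc n))} \<subseteq> {x. x < c - inverse (real (Suc (Suc n)))}"
        by blast
    qed
  qed (simp add: emeasure_eq_measure)
  moreover have "(\<Union>n. {x. x < c - inverse (real (Suc n))}) = {x. x < c}"
  proof safe
    fix x n assume "x < c - inverse (real (Suc n))"
    moreover have "inverse (real (Suc n)) > 0" by simp
    ultimately show "x < c" by linarith
  next
    fix x assume "x < c"
    then obtain n where "inverse (real (Suc n)) < c - x" using reals_Archimedean[of "c - x"] by auto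
    then have "x < c - inverse (real (Suc n))" by linarith
    then show "x \<in> (\<Union>n. {x. x < c - inverse (real (Suc n))})" by blast
  qed
  ultimately have lim1: "(\<lambda>n. F (c - inverse (real (Suc n)))) \<longlonglongrightarrow> F c" by (simp add: F_def)
  have "F c \<le> eps"
  proof (rule LIMSEQ_le_const2[OF lim1], intro exI allI impI)
    fix n :: nat
    have "c - inverse (real (Suc n)) < Sup S" unfolding c_def[symmetric] by simp
    then obtain s where "s \<in> S" "c - inverse (real (Suc n)) < s"
      using less_cSup_iff[of S] aS bdd by auto
    then show "F (c - inverse (real (Suc n))) \<le> eps"
      using Fmono[of "c - inverse (real (Suc n))" s] by (auto simp: S_def)
  qed
  have "(\<lambda>n. measure M {x. x < c + inverse (real (Suc n))}) \<longlonglongrightarrow> measure M (\<Inter>n. {x. x < c + inverse (real (Suc n))})"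
  proof (rule Lim_measure_decseq)
    show "range (\<lambda>n. {x. x < c + inverse (real (Suc n))}) \<subseteq> sets M" by (auto intro: sets)
    show "decseq (\<lambda>n. {x. x < c + inverse (real (Suc n))})"
    proof (rule decseq_SucI)
      fix n
      have "inverse (real (Suc (Suc n))) \<le> inverse (real (Suc n))"
        by (simp add: le_imp_inverse_le)
      then have "\<And>x. x < c + inverse (real (Suc (Suc n))) \<Longrightarrow> x < c + inverse (real (Suc n))"
        by linarith
      then show "{x. x < c + inverse (real (Suc (Suc n)))} \<subseteq> {x. x < c + inverse (real (Suc n))}"
        by blast
    qed
  qed (simp add: emeasure_eq_measure)
  moreover have "(\<Inter>n. {x. x < c + inverse (real (Suc n))}) = {x. x \<le> c}"
  proof (intro equalityI subsetI)
    fix x assume "x \<in> {x. x \<le> c}"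
    then have "x \<le> c" by simp
    have pos: "inverse (real (Suc n)) > 0" for n by simp
    have "x < c + inverse (real (Suc n))" for n using pos[of n] \<open>x \<le> c\<close> by linarith
    then show "x \<in> (\<Inter>n. {x. x < c + inverse (real (Suc n))})" by blast
  next
    fix x assume A: "x \<in> (\<Inter>n. {x. x < c + inverse (real (Suc n))})"
    have "x \<le> c"
    proof (rule ccontr)
      assume "\<not> x \<le> c"
      then obtain n where "inverse (real (Suc n)) < x - c" using reals_Archimedean[of "x - c"] by auto
      moreover have "x < c + inverse (real (Suc n))" using A by blast
      ultimately show False by linarith
    qed
    then show "x \<in> {x. x \<le> c}" by simp
  qed
  ultimately have lim2: "(\<lambda>n. F (c + inverse (real (Suc n)))) \<longlonglongrightarrow> measure M {x. x \<le> c}" by (simp add: F_def)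
  have "eps \<le> measure M {x. x \<le> c}"
  proof (rule LIMSEQ_le_const[OF lim2], intro exI allI impI)
    fix n :: nat
    have "\<not> c + inverse (real (Suc n)) \<le> c" by simp
    then have "c + inverse (real (Suc n)) \<notin> S"
      using cSup_upper[OF _ bdd] unfolding c_def by blast
    then show "eps \<le> F (c + inverse (real (Suc n)))" by (simp add: S_def)
  qed
  moreover have "measure M {x. c < x} = 1 - measure M {x. x \<le> c}"
  proof -
    have "{x. c < x} = space M - {x. x \<le> c}" using spM by auto
    then show ?thesis using prob_compl[of "{x. x \<le> c}"] by (simp add: sets)
  qed
  ultimately show ?thesis using \<open>F c \<le> eps\<close> by (auto simp: F_def)
qed

lemma int_max:
  fixes M :: "real measure"
  assumes "prob_space M" and sM: "sets M = sets borel"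
    and AE: "AE r in M. - a \<le> r \<and> r \<le> b"
  shows "integrable M (\<lambda>x. max (-x - z) 0)"
proof -
  interpret prob_space M by fact
  have m: "(\<lambda>x::real. max (-x - z) 0) \<in> borel_measurable M"
    unfolding measurable_cong_sets[OF sM refl] by measurable
  show ?thesis
    by (rule integrable_const_bound[where B="\<bar>a\<bar> + \<bar>z\<bar>", OF eventually_mono[OF AE] m])
       (auto simp: max_def abs_if)
qed

lemma int_bound:
  fixes M :: "real measure"
  assumes "prob_space M" and sM: "sets M = sets borel"
    and AE: "AE r in M. - a \<le> r \<and> r \<le> b"
    and q: "measure M {x. x < - m} \<le> eps" and "0 \<le> eps" "eps \<le> 1"
  shows "(\<integral>x. max (-x - z) 0 \<partial>M) \<le> (1 - eps) * max (m - z) 0 + eps * max (a - z) 0"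
proof -
  interpret prob_space M by fact
  have spM: "space M = UNIV" using sets_eq_imp_space_eq[OF sM] by simp
  define m' where "m' = min m a"
  define S where "S = {x::real. x < - m'}"
  define A where "A = max (a - z) 0"
  define B where "B = max (m' - z) 0"
  have Sset: "S \<in> sets M" using sM by (simp add: S_def)
  have qS: "prob S \<le> eps"
  proof (cases "m \<le> a")
    case True
    then show ?thesis using q by (simp add: S_def m'_def)
  next
    case False
    have "AE x in M. x \<notin> S" by (rule eventually_mono[OF AE]) (use False in \<open>auto simp: S_def m'_def\<close>)
    then have "prob S = 0" using Sset by (simp add: prob_eq_0)
    then show ?thesis using \<open>0 \<le> eps\<close> by simp
  qed
  have int1: "integrable M (\<lambda>x. max (-x - z) 0)" by (rule int_max[OF assms(1) sM AE])
  have int2: "integrable M (\<lambda>x. B + (A - B) * indicator S x)"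
  proof -
    have "integrable M (indicator S :: real \<Rightarrow> real)"
      using Sset by (intro integrable_real_indicator) (auto simp: emeasure_eq_measure)
    then show ?thesis by (rule Bochner_Integration.integrable_add[OF integrable_const integrable_mult_right])
  qed
  have "AE x in M. max (-x - z) 0 \<le> B + (A - B) * indicator S x"
  proof (rule eventually_mono[OF AE])
    fix x :: real assume x: "- a \<le> x \<and> x \<le> b"
    show "max (-x - z) 0 \<le> B + (A - B) * indicator S x"
    proof (cases "x \<in> S")
      case True
      then show ?thesis using x by (simp add: A_def B_def max_def)
    next
      case False
      then have "-x \<le> m'" by (simp add: S_def)
      then show ?thesis using False by (simp add: A_def B_def max_def)
    qed
  qed
  then have "(\<integral>x. max (-x - z) 0 \<partial>M) \<le> (\<integral>x. B + (A - B) * indicator S x \<partial>M)"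
    by (rule integral_mono_AE[OF int1 int2])
  also have "\<dots> = B + (A - B) * prob S"
    using Sset spM prob_space[unfolded spM] by (simp add: integral_add integrable_real_indicator emeasure_eq_measure prob_space)
  also have "\<dots> \<le> B + (A - B) * eps"
    using qS by (intro add_left_mono mult_left_mono) (auto simp: A_def B_def m'_def max_def)
  also have "\<dots> = (1 - eps) * B + eps * A" by (simp add: algebra_simps)
  also have "\<dots> \<le> (1 - eps) * max (m - z) 0 + eps * max (a - z) 0"
  proof -
    have "B \<le> max (m - z) 0" by (auto simp: B_def m'_def max_def)
    then have "(1 - eps) * B \<le> (1 - eps) * max (m - z) 0"
      using \<open>eps \<le> 1\<close> by (intro mult_left_mono) auto
    then show ?thesis by (simp add: A_def)
  qed
  finally show ?thesis .
qed

lemma CVaR_le: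
  fixes M :: "real measure"
  assumes "prob_space M" and sM: "sets M = sets borel"
    and AE: "AE r in M. - a \<le> r \<and> r \<le> b"
    and "0 < alpha" "alpha \<le> 1"
  shows "CVaR alpha M (\<lambda>x. - x) \<le> z + (\<integral>x. max (-x - z) 0 \<partial>M) / alpha"
proof -
  interpret prob_space M by fact
  have lb: "- b \<le> w + (\<integral>x. max (-x - w) 0 \<partial>M) / alpha" for w
  proof -
    let ?I = "\<integral>x. max (-x - w) 0 \<partial>M"
    have I0: "0 \<le> ?I" by (intro integral_nonneg_AE) auto
    have "AE x in M. - b - w \<le> max (-x - w) 0"
      by (rule eventually_mono[OF AE]) (auto simp: max_def)
    then have "(\<integral>x. (- b - w) \<partial>M) \<le> ?I"
      by (intro integral_mono_AE int_max[OF assms(1) sM AE]) auto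
    then have I1: "- b - w \<le> ?I" by (simp add: prob_space)
    have "?I \<le> ?I / alpha" using I0 assms(4,5) by (simp add: le_divide_eq mult_left_le)
    then show ?thesis using I1 by linarith
  qed
  show ?thesis unfolding CVaR_def
    by (rule cINF_lower) (auto intro!: bdd_belowI2[where m="-b"] lb)
qed

lemma pow_bound:
  fixes eps gamma :: real and N :: nat
  assumes "0 < eps" "eps < 1" "0 \<le> gamma" "gamma < 1"
    and "real N \<ge> ln (1 - gamma) / ln (1 - eps)"
  shows "(1 - eps) ^ N \<le> 1 - gamma"
proof -
  have l: "ln (1 - eps) < 0" using assms by simp
  have "real N * ln (1 - eps) \<le> ln (1 - gamma)"
    using assms(5) l by (simp add: divide_le_eq mult.commute)
  then have "ln ((1 - eps) ^ N) \<le> ln (1 - gamma)" by (simp add: ln_realpow)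
  then show ?thesis using assms by (subst (asm) ln_le_cancel_iff) auto
qed

theorem corollary7:
  fixes M :: "real measure" and a b eps gamma alpha :: real and N :: nat
  assumes "prob_space M"
    and "sets M = sets borel"
    and "a > 0" and "b > 0"
    and "AE r in M. - a \<le> r \<and> r \<le> b"
    and "0 < eps" and "eps < 1"
    and "0 \<le> gamma" and "gamma < 1"
    and "0 < alpha" and "alpha \<le> 1"
    and "real N \<ge> ln (1 - gamma) / ln (1 - eps)"
  shows "measure (PiM {..<N} (\<lambda>_. M))
           {r \<in> space (PiM {..<N} (\<lambda>_. M)).
              r_star_C alpha a eps N r \<ge> CVaR alpha M (\<lambda>x. - x)} \<ge> gamma"
proof -
  note sM = assms(2) and AE = assms(5)
  interpret prob_space M by fact
  define P where "P = PiM {..<N} (\<lambda>_. M)"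
  interpret P: prob_space P unfolding P_def by (intro prob_space_PiM) (rule assms(1))
  interpret PS: product_sigma_finite "\<lambda>_. M"
    unfolding product_sigma_finite_def using prob_space_imp_sigma_finite[OF assms(1)] by simp
  have spM: "space M = UNIV" using sets_eq_imp_space_eq[OF sM] by simp
  have pow: "(1 - eps) ^ N \<le> 1 - gamma" using pow_bound assms(6-9,12) by blast
  let ?C = "CVaR alpha M (\<lambda>x. - x)"
  define Sg where "Sg = {r \<in> space P. ?C \<le> r_star_C alpha a eps N r}"
  show ?thesis
  proof (cases "N = 0")
    case True
    then have "gamma \<le> 0" using pow by simp
    then show ?thesis by (simp add: measure_nonneg order_trans)
  next
    case False
    then have Npos: "{..<N} \<noteq> {}" by auto
    obtain c where c1: "measure M {x. x < c} \<le> eps" and c2: "measure M {x. c < x} \<le> 1 - eps"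
      using quantile_exists[OF assms(1) sM AE assms(6,7)] by blast
    define mx where "mx r = Max ((\<lambda>k. - r k) ` {..<N})" for r :: "nat \<Rightarrow> real"
    define T where "T = {p::real\<times>real. snd p > 0}"
    define trm where "trm m p = Lfun alpha m (fst p) (snd p) * (1 - eps) + ub alpha a (fst p) (snd p) * eps" for m p
    define h where "h m = (INF p\<in>T. trm m p)" for m
    have "(0, 1) \<in> T" unfolding T_def by simp
    then have T_ne: "T \<noteq> {}" by blast
    have zeta: "zeta_star alpha N r mu t = Lfun alpha (mx r) mu t" if "t > 0" for r mu t
    proof -
      have "Lfun alpha (mx r) mu t = Max ((\<lambda>x. Lfun alpha x mu t) ` ((\<lambda>k. - r k) ` {..<N}))"
        unfolding mx_def by (rule mono_Max_commute[OF Lfun_mono[OF that assms(10)]]) (use Npos in auto)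
      then show ?thesis unfolding zeta_star_def by (simp add: image_image)
    qed
    have rs: "r_star_C alpha a eps N r = h (mx r)" for r
      unfolding r_star_C_def h_def trm_def T_def by (intro INF_cong refl) (simp add: zeta)
    have trm_ge: "(1 - eps) * m + eps * a \<le> trm m p" if "p \<in> T" for m p
    proof -
      have "m \<le> Lfun alpha m (fst p) (snd p)" "a \<le> ub alpha a (fst p) (snd p)"
        using that Lfun_ge assms(10,11) by (auto simp: T_def ub_def)
      then show ?thesis unfolding trm_def using assms(6,7)
        by (smt (verit, ccfv_SIG) mult.commute mult_left_mono)
    qed
    have bdd: "bdd_below (trm m ` T)" for m
      using trm_ge by (intro bdd_belowI2) auto
    have hmono: "mono h"
    proof (rule monoI)
      fix x y :: real assume "x \<le> y"
      show "h x \<le> h y" unfolding h_def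
      proof (rule cINF_greatest[OF T_ne])
        fix p assume p: "p \<in> T"
        have "Lfun alpha x (fst p) (snd p) \<le> Lfun alpha y (fst p) (snd p)"
          using Lfun_mono[of "snd p" alpha "fst p"] p assms(10) \<open>x \<le> y\<close> by (auto simp: T_def mono_def)
        then have "trm x p \<le> trm y p" unfolding trm_def using assms(7) by simp
        then show "(INF p\<in>T. trm x p) \<le> trm y p"
          using cINF_lower[OF bdd p, of x] by linarith
      qed
    qed
    have comp: "(\<lambda>r. r k) \<in> borel_measurable P" if "k \<in> {..<N}" for k
      using measurable_component_singleton[OF that, of "\<lambda>_. M"]
      unfolding measurable_cong_sets[OF refl sM] P_def .
    have mxm: "mx \<in> borel_measurable P"
      unfolding mx_def by (intro borel_measurable_Max borel_measurable_uminus comp) auto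
    have hm: "(\<lambda>r. h (mx r)) \<in> borel_measurable P"
      using measurable_comp[OF mxm borel_measurable_mono[OF hmono]] by (simp add: comp_def)
    have Sg_sets: "Sg \<in> sets P" unfolding Sg_def rs by (intro borel_measurable_le hm) auto
    define E where "E = PiE {..<N} (\<lambda>_. {c<..})"
    have spP: "space P = PiE {..<N} (\<lambda>_. UNIV)" unfolding P_def by (simp add: space_PiM spM)
    have E_sets: "E \<in> sets P" unfolding E_def P_def using sM by (intro sets_PiM_I_finite) auto
    have "emeasure P E = (\<Prod>i\<in>{..<N}. emeasure M {c<..})"
      unfolding E_def P_def using sM by (intro PS.emeasure_PiM) auto
    also have "\<dots> = ennreal (prob {c<..} ^ N)"
      by (simp add: emeasure_eq_measure prod_ennreal ennreal_power)
    finally have "measure P E = prob {c<..} ^ N"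
      by (simp add: P.emeasure_eq_measure)
    also have "\<dots> \<le> (1 - eps) ^ N"
      using c2 by (intro power_mono) (auto simp: greaterThan_def)
    finally have PE: "measure P E \<le> 1 - gamma" using pow by linarith
    define G where "G = space P - E"
    have PG: "measure P G \<ge> gamma" unfolding G_def using P.prob_compl[OF E_sets] PE by linarith
    have GS: "G \<subseteq> Sg"
    proof
      fix r assume rG: "r \<in> G"
      then obtain k where k: "k < N" "r k \<le> c"
        unfolding G_def E_def spP by (auto simp: PiE_iff not_less)
      have "- r k \<le> mx r" unfolding mx_def using k by (intro Max_ge) auto
      then have "{x. x < - mx r} \<subseteq> {x. x < c}" using k by auto
      then have q: "prob {x. x < - mx r} \<le> eps"
        using c1 finite_measure_mono[of "{x. x < - mx r}" "{x. x < c}"] sM by auto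
      have "?C \<le> h (mx r)" unfolding h_def
      proof (rule cINF_greatest[OF T_ne])
        fix p assume p: "p \<in> T"
        define z where "z = snd p * fst p"
        have "?C \<le> z + (\<integral>x. max (-x - z) 0 \<partial>M) / alpha"
          by (rule CVaR_le[OF assms(1) sM AE assms(10,11)])
        also have "\<dots> \<le> z + ((1 - eps) * max (mx r - z) 0 + eps * max (a - z) 0) / alpha"
          using int_bound[OF assms(1) sM AE q, of z] assms(6,7,10)
          by (intro add_left_mono divide_right_mono) auto
        also have "\<dots> = trm (mx r) p"
          using p assms(10) unfolding trm_def ub_def z_def T_def
          by (simp add: Lfun_eq field_simps)
        finally show "?C \<le> trm (mx r) p" .
      qed
      then show "r \<in> Sg" using rG unfolding Sg_def G_def rs by auto
    qed
    have "measure P G \<le> measure P Sg" using GS Sg_sets by (rule P.finite_measure_mono)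
    then show ?thesis using PG unfolding Sg_def P_def by simp
  qed
qed

end
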